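(* Let $n\ge2$, $\beta\in\mathbb{R}$, and let $\omega_1,\dots,\omega_{n-1}$ be real numbers such that all sums $\sum_{i=m}^p\omega_i$ ($1\le m\le p\le n-1$) are nonzero. Then $$\int_0^\beta d\beta_1\int_0^{\beta_1}d\beta_2\cdots\int_0^{\beta_{n-1}}d\beta_n\,\exp\Big(-\sum_{j=1}^{n-1}\beta_j\omega_j+\beta_n\sum_{j=1}^{n-1}\omega_j\Big)$$ $$=\frac{1}{\prod_{k=1}^{n-1}\sum_{j=1}^k\omega_j}\Big(\beta-\sum_{k=1}^{n-1}\frac{1}{\sum_{j=1}^k\omega_j}\Big)-\sum_{p=1}^{n-1}\frac{(-1)^p\,e^{-\beta\sum_{i=1}^p\omega_i}}{\Big(\prod_{m=2}^p\sum_{i=m}^p\omega_i\Big)\Big(\sum_{r=1}^p\omega_r\Big)^2\Big(\prod_{k=p+1}^{n-1}\sum_{j=p+1}^k\omega_j\Big)},$$ where empty products equal $1$. *)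

theory Defs
  imports "HOL-Analysis.Analysis"
begin

fun nested_int :: "nat \<Rightarrow> (real list \<Rightarrow> real) \<Rightarrow> real list \<Rightarrow> real \<Rightarrow> real" where
  "nested_int 0 f xs b = f xs"
| "nested_int (Suc k) f xs b =
     (LBINT t = ereal 0 .. ereal b. nested_int k f (xs @ [t]) t)"

end

theory Submission
  imports Defs
begin


lemma V_rec:
  fixes y :: "nat \<Rightarrow> real"
  assumes fin: "finite I" and inj: "inj_on y I" and a: "a \<in> I" and b: "b \<in> I" and ab: "a \<noteq> b"
  shows "(\<Sum>p\<in>I. 1 / (\<Prod>q\<in>I-{p}. y p - y q)) =
     ((\<Sum>p\<in>I-{a}. 1 / (\<Prod>q\<in>I-{a}-{p}. y p - y q)) - (\<Sum>p\<in>I-{b}. 1 / (\<Prod>q\<in>I-{b}-{p}. y p - y q))) / (y b - y a)"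
proof -
  have nz: "\<And>p J. p \<in> I \<Longrightarrow> J \<subseteq> I - {p} \<Longrightarrow> (\<Prod>q\<in>J. y p - y q) \<noteq> 0"
  proof -
    fix p J assume "p \<in> I" "J \<subseteq> I - {p}"
    then show "(\<Prod>q\<in>J. y p - y q) \<noteq> 0"
      using fin inj by (subst prod_zero_iff) (auto intro: finite_subset dest: inj_onD)
  qed
  have yab: "y a \<noteq> y b" using inj a b ab by (auto dest: inj_onD)
  have s1: "(\<Sum>p\<in>I-{a}. 1 / (\<Prod>q\<in>I-{a}-{p}. y p - y q)) = (\<Sum>p\<in>I. if p = a then 0 else 1 / (\<Prod>q\<in>I-{a}-{p}. y p - y q))"
    using fin a by (simp add: sum.If_cases Int_absorb1 Diff_eq)
  have s2: "(\<Sum>p\<in>I-{b}. 1 / (\<Prod>q\<in>I-{b}-{p}. y p - y q)) = (\<Sum>p\<in>I. if p = b then 0 else 1 / (\<Prod>q\<in>I-{b}-{p}. y p - y q))"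
    using fin b by (simp add: sum.If_cases Int_absorb1 Diff_eq)
  show ?thesis
    unfolding s1 s2 sum_subtractf[symmetric] sum_divide_distrib
  proof (rule sum.cong[OF refl])
    fix p assume p: "p \<in> I"
    define K where "K = I - {a,b,p}"
    have fK: "finite K" using fin K_def by auto
    show "1 / (\<Prod>q\<in>I-{p}. y p - y q) = ((if p = a then 0 else 1 / (\<Prod>q\<in>I-{a}-{p}. y p - y q)) - (if p = b then 0 else 1 / (\<Prod>q\<in>I-{b}-{p}. y p - y q))) / (y b - y a)"
    proof (cases "p = a")
      case True
      have e1: "I - {p} = insert b K" using K_def True a b ab by auto
      have e2: "I - {b} - {p} = K" using K_def True by auto
      have nK: "(\<Prod>q\<in>K. y p - y q) \<noteq> 0" using nz[OF p, of K] K_def by auto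
      have "b \<notin> K" using K_def by auto
      then show ?thesis using True e1 e2 fK nK yab ab by (simp add: field_simps)
    next
      case pa: False
      show ?thesis
      proof (cases "p = b")
        case True
        have e1: "I - {p} = insert a K" using K_def True a b ab by auto
        have e2: "I - {a} - {p} = K" using K_def True by auto
        have nK: "(\<Prod>q\<in>K. y p - y q) \<noteq> 0" using nz[OF p, of K] K_def by auto
        have "a \<notin> K" using K_def by auto
        then show ?thesis using True e1 e2 fK nK yab ab by (simp add: field_simps)
      next
        case pb: False
        have e1: "I - {p} = insert a (insert b K)" using K_def pa pb a b ab by auto
        have e2: "I - {a} - {p} = insert b K" using K_def pa pb b ab by auto
        have e3: "I - {b} - {p} = insert a K" using K_def pa pb a ab by auto
        have nK: "(\<Prod>q\<in>K. y p - y q) \<noteq> 0" using nz[OF p, of K] K_def by auto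
        have "a \<notin> K" "b \<notin> K" using K_def by auto
        moreover have "y p \<noteq> y a" "y p \<noteq> y b" using inj p a b pa pb by (auto dest: inj_onD)
        moreover have "\<And>P. P \<noteq> 0 \<Longrightarrow> y p \<noteq> y a \<Longrightarrow> y p \<noteq> y b \<Longrightarrow> 1/((y p - y a)*((y p - y b)*P)) = (1/((y p - y b)*P) - 1/((y p - y a)*P))/(y b - y a)"
          using yab by (simp add: divide_simps)
        ultimately have "1/((y p - y a)*((y p - y b)*(\<Prod>q\<in>K. y p - y q))) = (1/((y p - y b)*(\<Prod>q\<in>K. y p - y q)) - 1/((y p - y a)*(\<Prod>q\<in>K. y p - y q)))/(y b - y a)"
          using nK by blast
        then show ?thesis using pa pb e1 e2 e3 fK ab \<open>a \<notin> K\<close> \<open>b \<notin> K\<close> by simp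
      qed
    qed
  qed
qed

lemma alg1: fixes ya Pa S1 S2 PJ :: real assumes "ya\<noteq>0" "Pa\<noteq>0" "PJ \<noteq> 0" "1/Pa + S1 = 0" "S2 = -1/PJ"
  shows "1/(ya*Pa) + (S1-S2)/ya = -1/(-ya*PJ)"
proof -
  have "1/(ya*Pa) = (1/Pa)/ya" by simp
  also have "\<dots> = -S1/ya" proof - have "1/Pa = -S1" using assms(4) by linarith then show ?thesis by simp qed
  finally show ?thesis using assms by (simp add: field_simps)
qed
lemma alg2: fixes ya Pa SU SJ PJ :: real assumes "ya\<noteq>0" "Pa\<noteq>0" "PJ \<noteq> 0" "1/(ya*Pa) + SU = -1/(-ya*PJ)"
  shows "1/(ya^2*Pa) + (SU - SJ/PJ)/ya = (SJ + 1/(-ya))/((-ya)*PJ)"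
proof -
  have "1/(ya^2*Pa) = (1/(ya*Pa))/ya" by (simp add: power2_eq_square)
  also have "\<dots> = (-1/(-ya*PJ) - SU)/ya" proof - have "1/(ya*Pa) = -1/(-ya*PJ) - SU" using assms(4) by linarith then show ?thesis by simp qed
  finally show ?thesis using assms(1,3) by (simp add: field_simps power2_eq_square)
qed
lemma V0:
  fixes y :: "nat \<Rightarrow> real"
  shows "finite I \<Longrightarrow> inj_on y I \<Longrightarrow> 2 \<le> card I \<Longrightarrow> (\<Sum>p\<in>I. 1 / (\<Prod>q\<in>I-{p}. y p - y q)) = 0"
proof (induction "card I" arbitrary: I rule: less_induct)
  case less
  then have "I \<noteq> {}" by auto
  then obtain a where a: "a \<in> I" by auto
  have "card (I - {a}) \<ge> 1" using less.prems a by auto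
  then have "I - {a} \<noteq> {}" by (metis card.empty not_one_le_zero)
  then obtain b where b: "b \<in> I" "b \<noteq> a" by auto
  show ?case
  proof (cases "card I = 2")
    case True
    have "I = {a, b}"
    proof -
      have "{a,b} \<subseteq> I" using a b by auto
      moreover have "card {a,b} = card I" using True b by auto
      ultimately show ?thesis using less.prems(1) by (metis card_subset_eq)
    qed
    moreover have "y a \<noteq> y b" using less.prems(2) a b by (auto dest: inj_onD)
    ultimately show ?thesis using b by (simp add: insert_Diff_if field_simps)
  next
    case False
    have c1: "card (I - {a}) < card I" "card (I - {b}) < card I"
      using less.prems a b by (auto intro: card_Diff1_less)
    have c2: "2 \<le> card (I - {a})" "2 \<le> card (I - {b})"
      using less.prems a b False by auto
    have i: "inj_on y (I - {a})" "inj_on y (I - {b})" using less.prems(2) by (auto intro: inj_on_subset)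
    have "(\<Sum>p\<in>I-{a}. 1 / (\<Prod>q\<in>I-{a}-{p}. y p - y q)) = 0"
      using less.hyps[OF c1(1) _ i(1) c2(1)] less.prems(1) by auto
    moreover have "(\<Sum>p\<in>I-{b}. 1 / (\<Prod>q\<in>I-{b}-{p}. y p - y q)) = 0"
      using less.hyps[OF c1(2) _ i(2) c2(2)] less.prems(1) by auto
    ultimately show ?thesis using V_rec[OF less.prems(1,2) a b(1)] b by auto
  qed
qed

lemma U_id:
  fixes y :: "nat \<Rightarrow> real"
  shows "finite I \<Longrightarrow> I \<noteq> {} \<Longrightarrow> inj_on y I \<Longrightarrow> (\<forall>p\<in>I. y p \<noteq> 0) \<Longrightarrow>
    (\<Sum>p\<in>I. 1 / (y p * (\<Prod>q\<in>I-{p}. y p - y q))) = - 1 / (\<Prod>q\<in>I. - y q)"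
proof (induction I rule: finite_ne_induct)
  case (singleton x)
  then show ?case by simp
next
  case (insert a J)
  have ya: "y a \<noteq> 0" using insert by auto
  have injJ: "inj_on y J" using insert.prems by auto
  have nz: "\<And>p. p \<in> J \<Longrightarrow> (\<Prod>q\<in>J-{p}. y p - y q) \<noteq> 0"
    using insert.hyps(1) injJ by (subst prod_zero_iff) (auto dest: inj_onD)
  have nza: "(\<Prod>q\<in>J. y a - y q) \<noteq> 0"
    using insert.hyps(1,3) insert.prems by (subst prod_zero_iff) (auto dest: inj_onD)
  have dpa: "\<And>p. p \<in> J \<Longrightarrow> y p - y a \<noteq> 0"
  proof -
    fix p assume "p \<in> J"
    moreover have "y a \<notin> y ` J" using insert.prems insert.hyps by simp
    ultimately show "y p - y a \<noteq> 0" by (auto simp: image_iff)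
  qed
  have e: "\<And>p. p \<in> J \<Longrightarrow> insert a J - {p} = insert a (J - {p})" using insert.hyps(3) by auto
  have V: "(\<Sum>p\<in>insert a J. 1 / (\<Prod>q\<in>insert a J-{p}. y p - y q)) = 0"
    using V0[of "insert a J" y] insert by (auto simp: card_insert_if card_gt_0_iff Suc_le_eq)
  then have V': "1 / (\<Prod>q\<in>J. y a - y q) + (\<Sum>p\<in>J. 1 / ((y p - y a) * (\<Prod>q\<in>J-{p}. y p - y q))) = 0"
    using insert.hyps by (simp add: e)
  have IH: "(\<Sum>p\<in>J. 1 / (y p * (\<Prod>q\<in>J-{p}. y p - y q))) = - 1 / (\<Prod>q\<in>J. - y q)"
    using insert by auto
  have "(\<Sum>p\<in>insert a J. 1 / (y p * (\<Prod>q\<in>insert a J-{p}. y p - y q)))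
      = 1 / (y a * (\<Prod>q\<in>J. y a - y q)) + (\<Sum>p\<in>J. 1 / (y p * ((y p - y a) * (\<Prod>q\<in>J-{p}. y p - y q))))"
    using insert.hyps by (simp add: e)
  also have "(\<Sum>p\<in>J. 1 / (y p * ((y p - y a) * (\<Prod>q\<in>J-{p}. y p - y q))))
      = (\<Sum>p\<in>J. (1 / ((y p - y a) * (\<Prod>q\<in>J-{p}. y p - y q)) - 1 / (y p * (\<Prod>q\<in>J-{p}. y p - y q))) / y a)"
  proof (rule sum.cong[OF refl])
    fix p assume p: "p \<in> J"
    have yp: "y p \<noteq> 0" using insert.prems p by auto
    show "1 / (y p * ((y p - y a) * (\<Prod>q\<in>J-{p}. y p - y q))) = (1 / ((y p - y a) * (\<Prod>q\<in>J-{p}. y p - y q)) - 1 / (y p * (\<Prod>q\<in>J-{p}. y p - y q))) / y a"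
      using nz[OF p] dpa[OF p] yp ya by (simp add: divide_simps)
  qed
  also have "\<dots> = ((\<Sum>p\<in>J. 1 / ((y p - y a) * (\<Prod>q\<in>J-{p}. y p - y q))) - (\<Sum>p\<in>J. 1 / (y p * (\<Prod>q\<in>J-{p}. y p - y q)))) / y a"
    by (simp only: sum_subtractf[symmetric] sum_divide_distrib)
  also have "1 / (y a * (\<Prod>q\<in>J. y a - y q)) + ((\<Sum>p\<in>J. 1 / ((y p - y a) * (\<Prod>q\<in>J-{p}. y p - y q))) - (\<Sum>p\<in>J. 1 / (y p * (\<Prod>q\<in>J-{p}. y p - y q)))) / y a = -1/(- y a * (\<Prod>q\<in>J. - y q))"
    by (rule alg1[OF ya nza _ V' IH]) (use insert in auto)
  finally show ?case using insert.hyps by simp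
qed

lemma T_id:
  fixes y :: "nat \<Rightarrow> real"
  shows "finite I \<Longrightarrow> inj_on y I \<Longrightarrow> (\<forall>p\<in>I. y p \<noteq> 0) \<Longrightarrow>
    (\<Sum>p\<in>I. 1 / ((y p)\<^sup>2 * (\<Prod>q\<in>I-{p}. y p - y q))) = (\<Sum>k\<in>I. 1 / (- y k)) / (\<Prod>q\<in>I. - y q)"
proof (induction I rule: finite_induct)
  case empty
  then show ?case by simp
next
  case (insert a J)
  have ya: "y a \<noteq> 0" using insert by auto
  have injJ: "inj_on y J" using insert.prems by auto
  have nz: "\<And>p. p \<in> J \<Longrightarrow> (\<Prod>q\<in>J-{p}. y p - y q) \<noteq> 0"
    using insert.hyps(1) injJ by (subst prod_zero_iff) (auto dest: inj_onD)
  have nza: "(\<Prod>q\<in>J. y a - y q) \<noteq> 0"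
    using insert.hyps(1,2) insert.prems by (subst prod_zero_iff) (auto dest: inj_onD)
  have nzJ: "(\<Prod>q\<in>J. - y q) \<noteq> 0" using insert by auto
  have dpa: "\<And>p. p \<in> J \<Longrightarrow> y p - y a \<noteq> 0"
  proof -
    fix p assume "p \<in> J"
    moreover have "y a \<notin> y ` J" using insert.prems insert.hyps by simp
    ultimately show "y p - y a \<noteq> 0" by (auto simp: image_iff)
  qed
  have e: "\<And>p. p \<in> J \<Longrightarrow> insert a J - {p} = insert a (J - {p})" using insert.hyps(2) by auto
  have U: "(\<Sum>p\<in>insert a J. 1 / (y p * (\<Prod>q\<in>insert a J-{p}. y p - y q))) = - 1 / (\<Prod>q\<in>insert a J. - y q)"
    using U_id[of "insert a J" y] insert by auto
  then have U': "1 / (y a * (\<Prod>q\<in>J. y a - y q)) + (\<Sum>p\<in>J. 1 / (y p * ((y p - y a) * (\<Prod>q\<in>J-{p}. y p - y q)))) = - 1 / (- y a * (\<Prod>q\<in>J. - y q))"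
    using insert.hyps by (simp add: e)
  have IH: "(\<Sum>p\<in>J. 1 / ((y p)\<^sup>2 * (\<Prod>q\<in>J-{p}. y p - y q))) = (\<Sum>k\<in>J. 1 / (- y k)) / (\<Prod>q\<in>J. - y q)"
    using insert by auto
  have "(\<Sum>p\<in>insert a J. 1 / ((y p)\<^sup>2 * (\<Prod>q\<in>insert a J-{p}. y p - y q)))
      = 1 / ((y a)\<^sup>2 * (\<Prod>q\<in>J. y a - y q)) + (\<Sum>p\<in>J. 1 / ((y p)\<^sup>2 * ((y p - y a) * (\<Prod>q\<in>J-{p}. y p - y q))))"
    using insert.hyps by (simp add: e)
  also have "(\<Sum>p\<in>J. 1 / ((y p)\<^sup>2 * ((y p - y a) * (\<Prod>q\<in>J-{p}. y p - y q))))
      = (\<Sum>p\<in>J. (1 / (y p * ((y p - y a) * (\<Prod>q\<in>J-{p}. y p - y q))) - 1 / ((y p)\<^sup>2 * (\<Prod>q\<in>J-{p}. y p - y q))) / y a)"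
  proof (rule sum.cong[OF refl])
    fix p assume p: "p \<in> J"
    have yp: "y p \<noteq> 0" using insert.prems p by auto
    show "1 / ((y p)\<^sup>2 * ((y p - y a) * (\<Prod>q\<in>J-{p}. y p - y q))) = (1 / (y p * ((y p - y a) * (\<Prod>q\<in>J-{p}. y p - y q))) - 1 / ((y p)\<^sup>2 * (\<Prod>q\<in>J-{p}. y p - y q))) / y a"
      using nz[OF p] dpa[OF p] yp ya by (simp add: divide_simps) (simp add: algebra_simps power2_eq_square)
  qed
  also have "\<dots> = ((\<Sum>p\<in>J. 1 / (y p * ((y p - y a) * (\<Prod>q\<in>J-{p}. y p - y q)))) - (\<Sum>p\<in>J. 1 / ((y p)\<^sup>2 * (\<Prod>q\<in>J-{p}. y p - y q)))) / y a"
    by (simp only: sum_subtractf[symmetric] sum_divide_distrib)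
  also have "1 / ((y a)\<^sup>2 * (\<Prod>q\<in>J. y a - y q)) + ((\<Sum>p\<in>J. 1 / (y p * ((y p - y a) * (\<Prod>q\<in>J-{p}. y p - y q)))) - (\<Sum>p\<in>J. 1 / ((y p)\<^sup>2 * (\<Prod>q\<in>J-{p}. y p - y q)))) / y a = ((\<Sum>k\<in>J. 1 / (- y k)) + 1 / (- y a)) / ((- y a) * (\<Prod>q\<in>J. - y q))"
    unfolding IH by (rule alg2[OF ya nza nzJ U'])
  finally show ?case using insert.hyps by (simp add: add.commute)
qed



definition gS :: "(nat \<Rightarrow> real) \<Rightarrow> nat \<Rightarrow> nat \<Rightarrow> real" where
  "gS c L p = (\<Sum>i=L..<L+p. c i)"

lemma generic:
  fixes c :: "nat \<Rightarrow> real" and f :: "real list \<Rightarrow> real"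
  assumes f: "\<And>ys. f ys = exp (\<Sum>j<N. c j * ys ! j)"
  shows "length xs + k = N \<Longrightarrow> (\<forall>p\<le>k. \<forall>q\<le>k. p \<noteq> q \<longrightarrow> gS c (length xs) p \<noteq> gS c (length xs) q) \<Longrightarrow>
    nested_int k f xs b = exp (\<Sum>j<length xs. c j * xs ! j) *
      (\<Sum>p=0..k. exp (b * gS c (length xs) p) / (\<Prod>q\<in>{0..k}-{p}. gS c (length xs) p - gS c (length xs) q))"
proof (induction k arbitrary: xs b)
  case 0
  then show ?case by (simp add: f gS_def)
next
  case (Suc k)
  define L where "L = length xs"
  define S where "S = gS c L"
  have S0: "S 0 = 0" by (simp add: S_def gS_def)
  have Sshift: "\<And>p. gS c (Suc L) p = S (Suc p) - c L"
    by (simp add: S_def gS_def sum.atLeast_Suc_lessThan)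
  have distS: "\<And>p q. p \<le> Suc k \<Longrightarrow> q \<le> Suc k \<Longrightarrow> p \<noteq> q \<Longrightarrow> S p \<noteq> S q"
    using Suc.prems(2) by (auto simp: S_def L_def)
  have dist: "\<forall>p\<le>k. \<forall>q\<le>k. p\<noteq>q \<longrightarrow> gS c (length (xs@[t])) p \<noteq> gS c (length (xs@[t])) q" for t
  proof -
    have l: "length (xs@[t]) = Suc L" by (simp add: L_def)
    show ?thesis unfolding l Sshift using distS by auto
  qed
  define E where "E = exp (\<Sum>j<L. c j * xs ! j)"
  define g where "g t = E * (\<Sum>p=0..k. exp (t * S (Suc p)) / (\<Prod>q\<in>{0..k}-{p}. S (Suc p) - S (Suc q)))" for t
  have inner: "nested_int k f (xs@[t]) t = g t" for t
  proof -
    have "nested_int k f (xs@[t]) t = exp(\<Sum>j<Suc L. c j * (xs@[t])!j) * (\<Sum>p=0..k. exp (t * gS c (Suc L) p) / (\<Prod>q\<in>{0..k}-{p}. gS c (Suc L) p - gS c (Suc L) q))"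
      using Suc.IH[of "xs@[t]" t] Suc.prems dist[of t] by (simp add: L_def)
    also have "exp(\<Sum>j<Suc L. c j * (xs@[t])!j) = E * exp (c L * t)"
    proof -
      have "(\<Sum>j<L. c j * (xs@[t])!j) = (\<Sum>j<L. c j * xs!j)"
        by (rule sum.cong) (auto simp: nth_append L_def)
      then show ?thesis by (simp add: E_def L_def exp_add)
    qed
    also have "E * exp (c L * t) * (\<Sum>p=0..k. exp (t * gS c (Suc L) p) / (\<Prod>q\<in>{0..k}-{p}. gS c (Suc L) p - gS c (Suc L) q)) = g t"
      unfolding g_def Sshift sum_distrib_left
    proof (rule sum.cong[OF refl])
      fix p assume "p \<in> {0..k}"
      have "exp (c L * t) * exp (t * (S (Suc p) - c L)) = exp (t * S (Suc p))"
        by (simp add: exp_add[symmetric] algebra_simps)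
      then show "E * exp (c L * t) * (exp (t * (S (Suc p) - c L)) / (\<Prod>q\<in>{0..k} - {p}. S (Suc p) - c L - (S (Suc q) - c L))) =
          E * (exp (t * S (Suc p)) / (\<Prod>q\<in>{0..k} - {p}. S (Suc p) - S (Suc q)))"
        by (simp add: mult.assoc)
    qed
    finally show ?thesis .
  qed
  define F where "F b = E * (\<Sum>p=0..Suc k. exp (b * S p) / (\<Prod>q\<in>{0..Suc k}-{p}. S p - S q))" for b
  have F0: "F 0 = 0"
  proof -
    have "(\<Sum>p\<in>{0..Suc k}. 1 / (\<Prod>q\<in>{0..Suc k}-{p}. S p - S q)) = 0"
    proof (rule V0)
      show "inj_on S {0..Suc k}"
      proof (rule inj_onI)
        fix p q assume "p\<in>{0..Suc k}" "q\<in>{0..Suc k}" "S p = S q"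
        then show "p = q" using distS by (meson atLeastAtMost_iff)
      qed
    qed auto
    then show ?thesis by (simp add: F_def)
  qed
  have derivF: "(F has_real_derivative g x) (at x within A)" for x A
  proof -
    have "(F has_real_derivative E * (\<Sum>p=0..Suc k. S p * exp (x * S p) / (\<Prod>q\<in>{0..Suc k}-{p}. S p - S q))) (at x within A)"
      unfolding F_def
    proof (intro DERIV_cmult DERIV_sum)
      fix p
      show "((\<lambda>b. exp (b * S p) / (\<Prod>q\<in>{0..Suc k}-{p}. S p - S q)) has_real_derivative S p * exp (x * S p) / (\<Prod>q\<in>{0..Suc k}-{p}. S p - S q)) (at x within A)"
        by (intro DERIV_cdivide) (auto intro!: derivative_eq_intros)
    qed
    moreover have "E * (\<Sum>p=0..Suc k. S p * exp (x * S p) / (\<Prod>q\<in>{0..Suc k}-{p}. S p - S q)) = g x"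
      unfolding sum.atLeast0_atMost_Suc_shift g_def
    proof (simp add: S0, rule disjI2, rule sum.cong[OF refl])
      fix p assume p: "p \<in> {0..k}"
      have e: "{0..Suc k} - {Suc p} = insert 0 (Suc ` ({0..k} - {p}))"
      proof (rule set_eqI)
        fix q show "q \<in> {0..Suc k} - {Suc p} \<longleftrightarrow> q \<in> insert 0 (Suc ` ({0..k} - {p}))"
          by (cases q) auto
      qed
      have nz: "S (Suc p) \<noteq> 0" using distS[of "Suc p" 0] p S0 by auto
      show "S (Suc p) * exp (x * S (Suc p)) / (\<Prod>q\<in>{0..Suc k} - {Suc p}. S (Suc p) - S q) =
         exp (x * S (Suc p)) / (\<Prod>q\<in>{0..k} - {p}. S (Suc p) - S (Suc q))"
        unfolding e using nz S0 by (simp add: prod.reindex)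
    qed
    ultimately show ?thesis by simp
  qed
  have "nested_int (Suc k) f xs b = (LBINT t=ereal 0..ereal b. g t)" by (simp add: inner)
  also have "\<dots> = F b - F 0"
  proof (rule interval_integral_FTC_finite)
    have nzP: "\<And>p. p \<in> {0..k} \<Longrightarrow> (\<Prod>q\<in>{0..k}-{p}. S (Suc p) - S (Suc q)) \<noteq> 0"
    proof -
      fix p assume p: "p \<in> {0..k}"
      have "\<And>q. q \<in> {0..k}-{p} \<Longrightarrow> S (Suc p) - S (Suc q) \<noteq> 0" using p distS by auto
      then show "(\<Prod>q\<in>{0..k}-{p}. S (Suc p) - S (Suc q)) \<noteq> 0" by (simp add: prod_zero_iff)
    qed
    show "continuous_on {min 0 b..max 0 b} g" unfolding g_def using nzP by (intro continuous_intros) blast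
    show "(F has_vector_derivative g x) (at x within {min 0 b..max 0 b})" for x
      using derivF by (simp add: has_real_derivative_iff_has_vector_derivative)
  qed
  finally have "nested_int (Suc k) f xs b = F b" using F0 by simp
  then show ?case by (simp add: F_def E_def S_def L_def)
qed



theorem mainTheorem4:
  fixes n :: nat and \<beta> :: real and \<omega> :: "nat \<Rightarrow> real"
  assumes "n \<ge> 2"
    and "\<And>m p. 1 \<le> m \<Longrightarrow> m \<le> p \<Longrightarrow> p \<le> n - 1 \<Longrightarrow> (\<Sum>i=m..p. \<omega> i) \<noteq> 0"
  shows "nested_int n
           (\<lambda>bs. exp (- (\<Sum>j=1..n-1. bs ! (j - 1) * \<omega> j) + bs ! (n - 1) * (\<Sum>j=1..n-1. \<omega> j)))
           [] \<beta>
       = 1 / (\<Prod>k=1..n-1. \<Sum>j=1..k. \<omega> j) * (\<beta> - (\<Sum>k=1..n-1. 1 / (\<Sum>j=1..k. \<omega> j)))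
         - (\<Sum>p=1..n-1. (-1) ^ p * exp (- \<beta> * (\<Sum>i=1..p. \<omega> i)) /
              ((\<Prod>m=2..p. \<Sum>i=m..p. \<omega> i) * (\<Sum>r=1..p. \<omega> r) ^ 2
               * (\<Prod>k=p+1..n-1. \<Sum>j=p+1..k. \<omega> j)))"
proof -
  define N where "N = n - 1"
  have nN: "n = Suc N" and N1: "N \<ge> 1" using assms(1) by (auto simp: N_def)
  obtain M where NM: "N = Suc M" using N1 by (cases N) auto
  define A where "A m = (\<Sum>i=1..m. \<omega> i)" for m
  have A0: "A 0 = 0" by (simp add: A_def)
  have ASuc: "\<And>m. A (Suc m) = A m + \<omega> (Suc m)" by (simp add: A_def)
  have Adiff: "\<And>m p. m \<le> p \<Longrightarrow> (\<Sum>i=Suc m..p. \<omega> i) = A p - A m"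
  proof -
    fix m p :: nat assume "m \<le> p"
    then show "(\<Sum>i=Suc m..p. \<omega> i) = A p - A m"
      by (induction p) (auto simp: ASuc le_Suc_eq)
  qed
  have hyp: "\<And>m p. 1 \<le> m \<Longrightarrow> m \<le> p \<Longrightarrow> p \<le> N \<Longrightarrow> (\<Sum>i=m..p. \<omega> i) \<noteq> 0"
    using assms(2) by (simp add: N_def)
  have Adist: "\<And>m p. m < p \<Longrightarrow> p \<le> N \<Longrightarrow> A p \<noteq> A m"
  proof -
    fix m p :: nat assume mp: "m < p" "p \<le> N"
    have "(\<Sum>i=Suc m..p. \<omega> i) \<noteq> 0" using hyp[of "Suc m" p] mp by simp
    then show "A p \<noteq> A m" using Adiff[of m p] mp by simp
  qed
  have Anz: "\<And>p. 1 \<le> p \<Longrightarrow> p \<le> N \<Longrightarrow> A p \<noteq> 0"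
  proof -
    fix p :: nat assume "1 \<le> p" "p \<le> N"
    then show "A p \<noteq> 0" using Adist[of 0 p] A0 by simp
  qed
  define c where "c j = (if j < N then - \<omega> (Suc j) else A N)" for j
  define F where "F = (\<lambda>bs::real list. exp (- (\<Sum>j=1..n-1. bs ! (j - 1) * \<omega> j) + bs ! (n - 1) * (\<Sum>j=1..n-1. \<omega> j)))"
  have Fc: "\<And>ys. F ys = exp (\<Sum>j<n. c j * ys ! j)"
  proof -
    fix ys :: "real list"
    have "(\<Sum>j<n. c j * ys ! j) = (\<Sum>j<N. c j * ys ! j) + A N * ys ! N"
      by (simp add: nN c_def)
    also have "(\<Sum>j<N. c j * ys ! j) = - (\<Sum>j<N. ys ! j * \<omega> (Suc j))"
      by (simp add: c_def sum_negf[symmetric] mult.commute)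
    also have "(\<Sum>j<N. ys ! j * \<omega> (Suc j)) = (\<Sum>j=1..N. ys ! (j - 1) * \<omega> j)"
      using sum.atLeast1_atMost_eq[of "\<lambda>j. ys ! (j - 1) * \<omega> j" N] by simp
    finally show "F ys = exp (\<Sum>j<n. c j * ys ! j)"
      by (simp add: F_def N_def A_def mult.commute)
  qed
  define Z where "Z p = (if p < N then - A (Suc p) else 0)" for p
  have gS_lt: "\<And>p. p < N \<Longrightarrow> gS c 1 p = \<omega> 1 + Z p"
  proof -
    fix p assume "p < N"
    then show "gS c 1 p = \<omega> 1 + Z p"
    proof (induction p)
      case 0
      then show ?case by (simp add: gS_def Z_def A_def)
    next
      case (Suc p)
      then have "gS c 1 (Suc p) = gS c 1 p + c (Suc p)" by (simp add: gS_def)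
      moreover have "c (Suc p) = - \<omega> (Suc (Suc p))" using Suc.prems by (simp add: c_def)
      ultimately show ?case using Suc by (simp add: Z_def ASuc)
    qed
  qed
  have gSZ: "\<And>p. p \<le> N \<Longrightarrow> gS c 1 p = \<omega> 1 + Z p"
  proof -
    fix p assume p: "p \<le> N"
    show "gS c 1 p = \<omega> 1 + Z p"
    proof (cases "p < N")
      case True then show ?thesis using gS_lt by simp
    next
      case False
      then have pN: "p = N" using p by simp
      have "gS c 1 (Suc M) = gS c 1 M + c (Suc M)" by (simp add: gS_def)
      then show ?thesis using gS_lt[of M] pN NM by (simp add: Z_def c_def ASuc)
    qed
  qed
  have Zdist: "\<And>p q. p \<le> N \<Longrightarrow> q \<le> N \<Longrightarrow> p \<noteq> q \<Longrightarrow> Z p \<noteq> Z q"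
  proof -
    fix p q assume pq: "p \<le> N" "q \<le> N" "p \<noteq> q"
    show "Z p \<noteq> Z q"
    proof (cases "p < N \<and> q < N")
      case True
      show ?thesis
      proof (cases "p < q")
        case True then show ?thesis using pq Adist[of "Suc p" "Suc q"] \<open>p < N \<and> q < N\<close> by (auto simp: Z_def)
      next
        case False then have "q < p" using pq by simp
        then show ?thesis using pq Adist[of "Suc q" "Suc p"] \<open>p < N \<and> q < N\<close> by (auto simp: Z_def)
      qed
    next
      case False
      then show ?thesis using pq Anz[of "Suc p"] Anz[of "Suc q"] by (auto simp: Z_def)
    qed
  qed
  define P where "P p = (\<Prod>q\<in>{0..N}-{p}. Z p - Z q)" for p
  define g where "g t = (\<Sum>p=0..N. exp (t * Z p) / P p)" for t
  have inner: "nested_int N F [t] t = g t" for t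
  proof -
    have "nested_int N F [t] t = exp (\<Sum>j<1. c j * [t] ! j) *
      (\<Sum>p=0..N. exp (t * gS c 1 p) / (\<Prod>q\<in>{0..N}-{p}. gS c 1 p - gS c 1 q))"
      using generic[where f=F and N=n and c=c and xs="[t]" and k=N and b=t] Fc gSZ Zdist by (simp add: nN)
    also have "\<dots> = g t"
      unfolding g_def sum_distrib_left
    proof (rule sum.cong[OF refl])
      fix p assume p: "p \<in> {0..N}"
      have "(\<Prod>q\<in>{0..N}-{p}. gS c 1 p - gS c 1 q) = P p"
        unfolding P_def by (rule prod.cong) (use p gSZ in auto)
      moreover have "exp (c 0 * t) * exp (t * gS c 1 p) = exp (t * Z p)"
        using p gSZ[of p] N1 by (simp add: c_def exp_add[symmetric] algebra_simps)
      ultimately show "exp (\<Sum>j<1. c j * [t] ! j) * (exp (t * gS c 1 p) / (\<Prod>q\<in>{0..N}-{p}. gS c 1 p - gS c 1 q)) = exp (t * Z p) / P p"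
        by simp
    qed
    finally show ?thesis .
  qed
  have Pnz: "\<And>p. p \<le> N \<Longrightarrow> P p \<noteq> 0"
  proof -
    fix p assume p: "p \<le> N"
    have "\<And>q. q \<in> {0..N}-{p} \<Longrightarrow> Z p - Z q \<noteq> 0" using p Zdist by auto
    then show "P p \<noteq> 0" unfolding P_def by (simp add: prod_zero_iff)
  qed
  define K where "K = 1 / P N"
  define H where "H b = b * K + (\<Sum>p<N. exp (b * Z p) / (Z p * P p))" for b
  have ZN: "Z N = 0" by (simp add: Z_def)
  have set0N: "{0..N} = insert N {..<N}" by auto
  have derivH: "(H has_real_derivative g x) (at x within X)" for x X
  proof -
    have "(H has_real_derivative K + (\<Sum>p<N. Z p * exp (x * Z p) / (Z p * P p))) (at x within X)"
    proof -
      have d1: "((\<lambda>b. b * K) has_real_derivative K) (at x within X)"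
        using DERIV_cmult_right[OF DERIV_ident, of K x X] by simp
      have d2: "((\<lambda>b. \<Sum>p<N. exp (b * Z p) / (Z p * P p)) has_real_derivative (\<Sum>p<N. Z p * exp (x * Z p) / (Z p * P p))) (at x within X)"
      proof (rule DERIV_sum)
        fix p
        show "((\<lambda>b. exp (b * Z p) / (Z p * P p)) has_real_derivative Z p * exp (x * Z p) / (Z p * P p)) (at x within X)"
          by (intro DERIV_cdivide) (auto intro!: derivative_eq_intros)
      qed
      show ?thesis unfolding H_def by (rule DERIV_add[OF d1 d2])
    qed
    moreover have "K + (\<Sum>p<N. Z p * exp (x * Z p) / (Z p * P p)) = g x"
    proof -
      have "(\<Sum>p<N. Z p * exp (x * Z p) / (Z p * P p)) = (\<Sum>p<N. exp (x * Z p) / P p)"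
      proof (rule sum.cong[OF refl])
        fix p assume "p \<in> {..<N}"
        then have "Z p \<noteq> 0" using Zdist[of p N] ZN by auto
        then show "Z p * exp (x * Z p) / (Z p * P p) = exp (x * Z p) / P p" by simp
      qed
      then show ?thesis unfolding g_def set0N K_def by (simp add: ZN)
    qed
    ultimately show ?thesis by simp
  qed
  have "nested_int n F [] \<beta> = (LBINT t=ereal 0..ereal \<beta>. g t)" by (simp add: nN inner)
  also have "\<dots> = H \<beta> - H 0"
  proof (rule interval_integral_FTC_finite)
    show "continuous_on {min 0 \<beta>..max 0 \<beta>} g" unfolding g_def using Pnz by (intro continuous_intros) auto
    show "(H has_vector_derivative g x) (at x within {min 0 \<beta>..max 0 \<beta>})" for x
      using derivH by (simp add: has_real_derivative_iff_has_vector_derivative)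
  qed
  finally have L: "nested_int n F [] \<beta> = \<beta> * K + (\<Sum>p<N. exp (\<beta> * Z p) / (Z p * P p)) - (\<Sum>p<N. 1 / (Z p * P p))"
    by (simp add: H_def)
  have PA: "(\<Prod>k=1..N. A k) = (\<Prod>q<N. A (Suc q))"
    using prod.atLeast1_atMost_eq[of A N] by simp
  have SA: "(\<Sum>k=1..N. 1 / A k) = (\<Sum>q<N. 1 / A (Suc q))"
    using sum.atLeast1_atMost_eq[of "\<lambda>k. 1 / A k" N] by simp
  have ZltN: "\<And>q. q < N \<Longrightarrow> Z q = - A (Suc q)" by (simp add: Z_def)
  have KA: "K = 1 / (\<Prod>k=1..N. A k)"
  proof -
    have e: "{0..N} - {N} = {..<N}" by auto
    have "P N = (\<Prod>q<N. A (Suc q))" unfolding P_def e ZN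
      by (rule prod.cong) (auto simp: ZltN)
    then show ?thesis unfolding K_def PA by simp
  qed
  have ZP: "\<And>p. p < N \<Longrightarrow> Z p * P p = (Z p)\<^sup>2 * (\<Prod>q\<in>{..<N}-{p}. Z p - Z q)"
  proof -
    fix p assume p: "p < N"
    have e: "{0..N} - {p} = insert N ({..<N} - {p})" using p by auto
    show "Z p * P p = (Z p)\<^sup>2 * (\<Prod>q\<in>{..<N}-{p}. Z p - Z q)"
      unfolding P_def e by (simp add: ZN power2_eq_square)
  qed
  have CA: "(\<Sum>p<N. 1 / (Z p * P p)) = (\<Sum>k=1..N. 1 / A k) / (\<Prod>k=1..N. A k)"
  proof -
    have "(\<Sum>p<N. 1 / (Z p * P p)) = (\<Sum>p<N. 1 / ((Z p)\<^sup>2 * (\<Prod>q\<in>{..<N}-{p}. Z p - Z q)))"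
      by (rule sum.cong) (auto simp: ZP)
    also have "\<dots> = (\<Sum>k<N. 1 / (- Z k)) / (\<Prod>q<N. - Z q)"
    proof (rule T_id)
      show "inj_on Z {..<N}"
      proof (rule inj_onI)
        fix x y assume "x \<in> {..<N}" "y \<in> {..<N}" "Z x = Z y"
        then show "x = y" using Zdist[of x y] by (meson lessThan_iff less_imp_le)
      qed
      show "\<forall>p\<in>{..<N}. Z p \<noteq> 0" using Zdist ZN by force
    qed auto
    also have "\<dots> = (\<Sum>k<N. 1 / A (Suc k)) / (\<Prod>q<N. A (Suc q))"
      by (simp add: ZltN)
    finally show ?thesis unfolding PA SA .
  qed
  have EA: "(\<Sum>p<N. exp (\<beta> * Z p) / (Z p * P p)) = - (\<Sum>p=1..N. (-1) ^ p * exp (- \<beta> * A p) /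
              ((\<Prod>m=2..p. \<Sum>i=m..p. \<omega> i) * (A p) ^ 2 * (\<Prod>k=p+1..N. \<Sum>j=p+1..k. \<omega> j)))"
  proof -
    have "(\<Sum>p=1..N. (-1) ^ p * exp (- \<beta> * A p) /
              ((\<Prod>m=2..p. \<Sum>i=m..p. \<omega> i) * (A p) ^ 2 * (\<Prod>k=p+1..N. \<Sum>j=p+1..k. \<omega> j)))
       = (\<Sum>p<N. (-1) ^ Suc p * exp (- \<beta> * A (Suc p)) /
              ((\<Prod>m=2..Suc p. \<Sum>i=m..Suc p. \<omega> i) * (A (Suc p)) ^ 2 * (\<Prod>k=Suc (Suc p)..N. \<Sum>j=Suc (Suc p)..k. \<omega> j)))"
      using sum.atLeast1_atMost_eq[of "\<lambda>p. (-1) ^ p * exp (- \<beta> * A p) /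
              ((\<Prod>m=2..p. \<Sum>i=m..p. \<omega> i) * (A p) ^ 2 * (\<Prod>k=p+1..N. \<Sum>j=p+1..k. \<omega> j))" N] by simp
    also have "\<dots> = (\<Sum>p<N. - (exp (\<beta> * Z p) / (Z p * P p)))"
    proof (rule sum.cong[OF refl])
      fix p assume "p \<in> {..<N}"
      then have p: "p < N" by simp
      define X1 where "X1 = (\<Prod>q<p. A (Suc q) - A (Suc p))"
      define X2 where "X2 = (\<Prod>q\<in>{Suc p..<N}. A (Suc q) - A (Suc p))"
      have ZPX: "Z p * P p = (A (Suc p))\<^sup>2 * (X1 * X2)"
      proof -
        have e: "{..<N} - {p} = {..<p} \<union> {Suc p..<N}" using p by auto
        have "(\<Prod>q\<in>{..<N}-{p}. Z p - Z q) = (\<Prod>q\<in>{..<N}-{p}. A (Suc q) - A (Suc p))"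
          by (rule prod.cong) (auto simp: ZltN p)
        also have "\<dots> = X1 * X2" unfolding e X1_def X2_def
          by (rule prod.union_disjoint) auto
        finally show ?thesis using ZP[OF p] ZltN[OF p] by simp
      qed
      have D1: "(\<Prod>m=2..Suc p. \<Sum>i=m..Suc p. \<omega> i) = (-1) ^ p * X1"
      proof -
        have "(\<Prod>m=2..Suc p. \<Sum>i=m..Suc p. \<omega> i) = (\<Prod>m=Suc (Suc 0)..Suc p. A (Suc p) - A (m - 1))"
          by (rule prod.cong) (auto simp: Adiff[symmetric] intro!: sum.cong)
        also have "\<dots> = (\<Prod>m=Suc 0..p. A (Suc p) - A m)"
          unfolding prod.atLeast_Suc_atMost_Suc_shift by (simp add: comp_def)
        also have "\<dots> = (\<Prod>q<p. A (Suc p) - A (Suc q))"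
          by (rule prod.atLeast1_atMost_eq)
        also have "\<dots> = (\<Prod>q<p. - (A (Suc q) - A (Suc p)))" by simp
        also have "\<dots> = (-1) ^ p * X1" unfolding X1_def prod_uminus by simp
        finally show ?thesis .
      qed
      have D3: "(\<Prod>k=Suc (Suc p)..N. \<Sum>j=Suc (Suc p)..k. \<omega> j) = X2"
      proof -
        have "(\<Prod>k=Suc (Suc p)..N. \<Sum>j=Suc (Suc p)..k. \<omega> j) = (\<Prod>k=Suc (Suc p)..Suc M. A k - A (Suc p))"
          unfolding NM by (rule prod.cong) (auto simp: Adiff)
        also have "\<dots> = (\<Prod>q=Suc p..M. A (Suc q) - A (Suc p))"
          unfolding prod.atLeast_Suc_atMost_Suc_shift by (simp add: comp_def)
        also have "{Suc p..M} = {Suc p..<N}" using NM by auto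
        finally show ?thesis unfolding X2_def .
      qed
      show "(-1) ^ Suc p * exp (- \<beta> * A (Suc p)) /
              ((\<Prod>m=2..Suc p. \<Sum>i=m..Suc p. \<omega> i) * (A (Suc p)) ^ 2 * (\<Prod>k=Suc (Suc p)..N. \<Sum>j=Suc (Suc p)..k. \<omega> j))
          = - (exp (\<beta> * Z p) / (Z p * P p))"
        unfolding D1 D3 ZPX unfolding ZltN[OF p] by (simp add: power2_eq_square mult_ac)
    qed
    finally show ?thesis by (simp add: sum_negf)
  qed
  have L': "nested_int n F [] \<beta> = \<beta> / (\<Prod>k=1..N. A k) - (\<Sum>p=1..N. (-1) ^ p * exp (- \<beta> * A p) /
              ((\<Prod>m=2..p. \<Sum>i=m..p. \<omega> i) * (A p) ^ 2 * (\<Prod>k=p+1..N. \<Sum>j=p+1..k. \<omega> j)))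
     - (\<Sum>k=1..N. 1 / A k) / (\<Prod>k=1..N. A k)"
    unfolding L KA EA CA by simp
  show ?thesis
    using L' unfolding F_def N_def[symmetric] A_def[symmetric]
    by (simp add: algebra_simps diff_divide_distrib)
qed

end
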